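(* There exists $C(d,\Lambda)<\infty$ such that, for every $m\in\mathbb N$ and $p\in\mathbb P_m^*$, there exists $q\in\mathbb P^*_{m+2}$ with $-\nabla\cdot\bar{\mathbf a}\nabla q=p$ in $\mathbb R^d$ and $$|\nabla^{m+2}q|\le C^m|\nabla^mp|.$$
   Context: $\bar{\mathbf a}\in\mathbb R^{d\times d}$ is a constant matrix (the homogenized matrix of a periodic coefficient field) satisfying $|\xi|^2\le\xi\cdot\bar{\mathbf a}\xi$ and $|\eta\cdot\bar{\mathbf a}\xi|\le\Lambda|\eta||\xi|$ for all $\xi,\eta\in\mathbb R^d$, with $\Lambda\ge1$. $\mathbb P_m^*$ is the space of real homogeneous polynomials of degree $m$ on $\mathbb R^d$. For $p\in\mathbb P_m^*$, $\nabla^mp=(\partial^\alpha p)_{|\alpha|=m}$ is a constant symmetric $m$-tensor, and for a symmetric $m$-tensor $T$, $|T|:=\big(\sum_{|\alpha|=m}\frac{m!}{\alpha!}T_\alpha^2\big)^{1/2}$. *)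

theory Defs
  imports "HOL-Analysis.Analysis"
begin

text \<open>Points of R^d are vectors of type real^'d (d = CARD('d)).
  Multi-indices are functions 'd => nat; |alpha| = sum alpha UNIV.\<close>

definition multi_indices :: "nat \<Rightarrow> ('d::finite \<Rightarrow> nat) set" where
  "multi_indices m = {\<alpha>. (\<Sum>i\<in>UNIV. \<alpha> i) = m}"

definition monomial :: "('d::finite \<Rightarrow> nat) \<Rightarrow> real^'d \<Rightarrow> real" where
  "monomial \<alpha> x = (\<Prod>i\<in>UNIV. (x $ i) ^ (\<alpha> i))"

definition hom_polys :: "nat \<Rightarrow> (real^'d::finite \<Rightarrow> real) set" where
  "hom_polys m = {p. \<exists>c. p = (\<lambda>x. \<Sum>\<alpha>\<in>multi_indices m. c \<alpha> * monomial \<alpha> x)}"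

definition partial :: "'d::finite \<Rightarrow> (real^'d \<Rightarrow> real) \<Rightarrow> real^'d \<Rightarrow> real" where
  "partial i f x = deriv (\<lambda>t. f (x + t *\<^sub>R axis i 1)) 0"

fun partial_list :: "'d::finite list \<Rightarrow> (real^'d \<Rightarrow> real) \<Rightarrow> real^'d \<Rightarrow> real" where
  "partial_list [] f = f"
| "partial_list (i # is) f = partial i (partial_list is f)"

definition partial_multi :: "('d::finite \<Rightarrow> nat) \<Rightarrow> (real^'d \<Rightarrow> real) \<Rightarrow> real^'d \<Rightarrow> real" where
  "partial_multi \<alpha> f = partial_list (SOME xs. \<forall>i. count_list xs i = \<alpha> i) f"

text \<open>The constant symmetric m-tensor nabla^m p = (partial^alpha p)_{|alpha|=m}
  (evaluated at the origin; it is constant for p in P_m^*).\<close>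
definition grad_tensor :: "nat \<Rightarrow> (real^'d::finite \<Rightarrow> real) \<Rightarrow> ('d \<Rightarrow> nat) \<Rightarrow> real" where
  "grad_tensor m p \<alpha> = partial_multi \<alpha> p 0"

definition tensor_norm :: "nat \<Rightarrow> (('d::finite \<Rightarrow> nat) \<Rightarrow> real) \<Rightarrow> real" where
  "tensor_norm m T = sqrt (\<Sum>\<alpha>\<in>multi_indices m.
      (fact m / (\<Prod>i\<in>UNIV. fact (\<alpha> i))) * (T \<alpha>)^2)"

definition neg_div_A_grad :: "real^'d^'d \<Rightarrow> (real^'d::finite \<Rightarrow> real) \<Rightarrow> real^'d \<Rightarrow> real" where
  "neg_div_A_grad A q x = - (\<Sum>i\<in>UNIV. partial i (\<lambda>y. \<Sum>j\<in>UNIV. A $ i $ j * partial j q y) x)"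

end

theory Submission
  imports Defs "HOL-Library.Function_Algebras"
begin


lemma fv_vs: "vector_space (\<lambda>(r::real) (f::'a \<Rightarrow> real) x. r * f x)"
  by unfold_locales (auto simp: fun_eq_iff algebra_simps)

lemma sum_fun_apply: "finite J \<Longrightarrow> (sum f J) k = (\<Sum>j\<in>J. f j k)" for f :: "'b \<Rightarrow> 'a \<Rightarrow> real"
  by (induction J rule: finite_induct) (auto simp: plus_fun_def)

lemma fin_surj:
  fixes T :: "('a \<Rightarrow> real) \<Rightarrow> ('a \<Rightarrow> real)" and J :: "'a set"
  assumes fin: "finite J"
    and lin: "\<And>x y a b. T (\<lambda>k. a * x k + b * y k) = (\<lambda>k. a * T x k + b * T y k)"
    and pos: "\<And>x. (\<forall>k\<in>J. T x k = 0) \<Longrightarrow> \<forall>k\<in>J. x k = 0"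
  shows "\<exists>x. \<forall>k\<in>J. T x k = p k"
proof -
  define s where "s = (\<lambda>(r::real) (f::'a \<Rightarrow> real) x. r * f x)"
  interpret fv: vector_space s unfolding s_def by (rule fv_vs)
  define T' where "T' = (\<lambda>x k. if k \<in> J then T x k else 0)"
  define V where "V = {x::'a\<Rightarrow>real. \<forall>k. k \<notin> J \<longrightarrow> x k = 0}"
  have addT: "T (x + y) = T x + T y" for x y
    using lin[of 1 x 1 y] by (simp add: plus_fun_def)
  have scT: "T (s r x) = s r (T x)" for r x
    using lin[of r x 0 x] by (simp add: s_def)
  interpret lin: Vector_Spaces.linear s s T'
    apply unfold_locales
    using addT scT by (auto simp: T'_def fun_eq_iff s_def plus_fun_def)
  have subV: "fv.subspace V"
    unfolding fv.subspace_def V_def by (auto simp: s_def)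
  define E where "E = (\<lambda>j k. if k = j then (1::real) else 0) ` J"
  have finE: "finite E" using fin by (simp add: E_def)
  have VE: "V \<subseteq> fv.span E"
  proof
    fix x assume "x \<in> V"
    have "x = (\<Sum>j\<in>J. s (x j) (\<lambda>k. if k = j then 1 else 0))"
      using \<open>x \<in> V\<close> fin by (auto simp: fun_eq_iff s_def V_def sum_fun_apply if_distrib cong: if_cong)
    also have "\<dots> \<in> fv.span E"
      by (intro fv.span_sum fv.span_scale fv.span_base) (auto simp: E_def)
    finally show "x \<in> fv.span E" .
  qed
  obtain B where B: "B \<subseteq> V" "fv.independent B" "V \<subseteq> fv.span B" "card B = fv.dim V"
    by (rule fv.basis_exists)
  have finB: "finite B"
    using fv.independent_span_bound[OF finE B(2)] B(1) VE by auto
  have spanB: "fv.span B = V"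
    using B(1,3) fv.span_minimal[OF B(1) subV] by auto
  have injV: "inj_on T' V"
  proof (subst lin.inj_on_iff_eq_0[OF subV], intro ballI impI)
    fix x assume x: "x \<in> V" "T' x = 0"
    then have "\<forall>k\<in>J. T x k = 0" by (auto simp: T'_def fun_eq_iff) metis
    from pos[OF this] x(1) show "x = 0" by (auto simp: V_def fun_eq_iff)
  qed
  have indTB: "fv.independent (T' ` B)"
    using lin.independent_injective_image[OF B(2)] injV spanB by simp
  have cardTB: "card (T' ` B) = card B"
    using card_image inj_on_subset[OF injV B(1)] by blast
  have TBV: "T' ` B \<subseteq> V" by (auto simp: T'_def V_def)
  define p' where "p' = (\<lambda>k. if k \<in> J then p k else 0)"
  have p'V: "p' \<in> V" by (auto simp: p'_def V_def)
  have "p' \<in> fv.span (T' ` B)"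
  proof (rule ccontr)
    assume nin: "p' \<notin> fv.span (T' ` B)"
    then have ind: "fv.independent (insert p' (T' ` B))"
      using fv.independent_insertI[OF nin indTB] by simp
    have "insert p' (T' ` B) \<subseteq> fv.span B" using p'V TBV spanB by auto
    from fv.independent_span_bound[OF finB ind this]
    have "card (insert p' (T' ` B)) \<le> card B" by simp
    moreover have "p' \<notin> T' ` B" using nin fv.span_base by blast
    ultimately show False using finB cardTB by simp
  qed
  then obtain x where "p' = T' x" using lin.span_image by auto
  then show ?thesis by (auto simp: p'_def T'_def fun_eq_iff) metis
qed



definition inc :: "'d \<Rightarrow> ('d \<Rightarrow> nat) \<Rightarrow> ('d \<Rightarrow> nat)" where
  "inc i \<alpha> = \<alpha>(i := Suc (\<alpha> i))"
definition dec :: "'d \<Rightarrow> ('d \<Rightarrow> nat) \<Rightarrow> ('d \<Rightarrow> nat)" where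
  "dec i \<alpha> = \<alpha>(i := \<alpha> i - 1)"
definition Dop :: "'d \<Rightarrow> (('d \<Rightarrow> nat) \<Rightarrow> real) \<Rightarrow> (('d \<Rightarrow> nat) \<Rightarrow> real)" where
  "Dop i c = (\<lambda>\<alpha>. real (Suc (\<alpha> i)) * c (inc i \<alpha>))"
definition Xop :: "'d \<Rightarrow> (('d \<Rightarrow> nat) \<Rightarrow> real) \<Rightarrow> (('d \<Rightarrow> nat) \<Rightarrow> real)" where
  "Xop i c = (\<lambda>\<alpha>. if \<alpha> i = 0 then 0 else c (dec i \<alpha>))"
definition wt :: "('d::finite \<Rightarrow> nat) \<Rightarrow> real" where
  "wt \<alpha> = (\<Prod>k\<in>UNIV. fact (\<alpha> k))"
definition ip :: "nat \<Rightarrow> (('d::finite \<Rightarrow> nat) \<Rightarrow> real) \<Rightarrow> (('d \<Rightarrow> nat) \<Rightarrow> real) \<Rightarrow> real" where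
  "ip m c e = (\<Sum>\<alpha>\<in>multi_indices m. wt \<alpha> * c \<alpha> * e \<alpha>)"

lemma wt_pos: "wt \<alpha> > 0"
  unfolding wt_def by (intro prod_pos) auto

lemma finite_multi_indices: "finite (multi_indices m :: ('d::finite \<Rightarrow> nat) set)"
proof -
  have "multi_indices m \<subseteq> Pi\<^sub>E (UNIV::'d set) (\<lambda>_. {..m})"
  proof
    fix \<alpha> :: "'d \<Rightarrow> nat" assume "\<alpha> \<in> multi_indices m"
    then have "\<alpha> k \<le> m" for k
      unfolding multi_indices_def using member_le_sum[of k UNIV \<alpha>] by auto
    then show "\<alpha> \<in> Pi\<^sub>E UNIV (\<lambda>_. {..m})" by (auto simp: PiE_UNIV_domain)
  qed
  moreover have "finite (Pi\<^sub>E (UNIV::'d set) (\<lambda>_. {..m}))" by (intro finite_PiE) auto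
  ultimately show ?thesis by (rule finite_subset)
qed

lemma sum_upd: "sum (\<gamma>(i := v)) (UNIV::'d::finite set) + \<gamma> i = sum \<gamma> UNIV + (v::nat)"
proof -
  have "sum (\<gamma>(i := v)) UNIV = v + sum \<gamma> (UNIV - {i})"
    by (subst sum.remove[of _ i]) (auto intro!: sum.cong)
  moreover have "sum \<gamma> UNIV = \<gamma> i + sum \<gamma> (UNIV - {i})"
    by (subst sum.remove[of _ i]) auto
  ultimately show ?thesis by presburger
qed

lemma inc_mem: "\<gamma> \<in> multi_indices m \<Longrightarrow> inc i \<gamma> \<in> multi_indices (Suc m)"
  unfolding multi_indices_def inc_def using sum_upd[of \<gamma> i "Suc (\<gamma> i)"] by auto

lemma dec_mem: "\<alpha> \<in> multi_indices (Suc m) \<Longrightarrow> \<alpha> i > 0 \<Longrightarrow> dec i \<alpha> \<in> multi_indices m"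
  unfolding multi_indices_def dec_def using sum_upd[of \<alpha> i "\<alpha> i - 1"] by auto

lemma dec_inc[simp]: "dec i (inc i \<gamma>) = \<gamma>"
  by (auto simp: dec_def inc_def)
lemma inc_dec[simp]: "\<alpha> i > 0 \<Longrightarrow> inc i (dec i \<alpha>) = \<alpha>"
  by (auto simp: dec_def inc_def fun_eq_iff)
lemma inc_same[simp]: "inc i \<gamma> i = Suc (\<gamma> i)" by (simp add: inc_def)
lemma inc_other[simp]: "j \<noteq> i \<Longrightarrow> inc i \<gamma> j = \<gamma> j" by (simp add: inc_def)
lemma dec_same[simp]: "dec i \<gamma> i = \<gamma> i - 1" by (simp add: dec_def)
lemma dec_other[simp]: "j \<noteq> i \<Longrightarrow> dec i \<gamma> j = \<gamma> j" by (simp add: dec_def)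

lemma wt_inc: "wt (inc i \<gamma>) = real (Suc (\<gamma> i)) * wt \<gamma>"
proof -
  have a: "wt (inc i \<gamma>) = fact (Suc (\<gamma> i)) * (\<Prod>k\<in>UNIV-{i}. fact (inc i \<gamma> k))"
    unfolding wt_def by (subst prod.remove[of _ i]) auto
  have b: "(\<Prod>k\<in>UNIV-{i}. fact (inc i \<gamma> k)) = (\<Prod>k\<in>UNIV-{i}. fact (\<gamma> k) :: real)"
    by (intro prod.cong) auto
  have c: "wt \<gamma> = fact (\<gamma> i) * (\<Prod>k\<in>UNIV-{i}. fact (\<gamma> k))"
    unfolding wt_def by (subst prod.remove[of _ i]) auto
  show ?thesis unfolding a b c by simp
qed

lemma sum_reindex_inc:
  fixes f :: "('d::finite \<Rightarrow> nat) \<Rightarrow> real"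
  assumes "\<And>\<alpha>. \<alpha> \<in> multi_indices (Suc m) \<Longrightarrow> \<alpha> i = 0 \<Longrightarrow> f \<alpha> = 0"
  shows "(\<Sum>\<alpha>\<in>multi_indices (Suc m). f \<alpha>) = (\<Sum>\<gamma>\<in>multi_indices m. f (inc i \<gamma>))"
proof -
  have "(\<Sum>\<alpha>\<in>multi_indices (Suc m). f \<alpha>) = (\<Sum>\<alpha>\<in>inc i ` multi_indices m. f \<alpha>)"
  proof (rule sum.mono_neutral_right)
    show "finite (multi_indices (Suc m) :: ('d \<Rightarrow> nat) set)" by (rule finite_multi_indices)
    show "inc i ` multi_indices m \<subseteq> multi_indices (Suc m)" using inc_mem by blast
    show "\<forall>\<alpha>\<in>multi_indices (Suc m) - inc i ` multi_indices m. f \<alpha> = 0"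
    proof
      fix \<alpha> assume a: "\<alpha> \<in> multi_indices (Suc m) - inc i ` multi_indices m"
      have "\<alpha> i = 0"
      proof (rule ccontr)
        assume "\<alpha> i \<noteq> 0"
        then have "\<alpha> = inc i (dec i \<alpha>)" "dec i \<alpha> \<in> multi_indices m" using a dec_mem by auto
        then show False using a by blast
      qed
      then show "f \<alpha> = 0" using assms a by auto
    qed
  qed
  also have "\<dots> = (\<Sum>\<gamma>\<in>multi_indices m. f (inc i \<gamma>))"
    using sum.reindex[of "inc i" "multi_indices m" f] by (simp add: inj_on_def) (metis dec_inc)
  finally show ?thesis .
qed

lemma ip_X_right_Suc: "ip (Suc n) r (Xop c v) = ip n (Dop c r) v"
  unfolding ip_def
  by (subst sum_reindex_inc[where i=c]) (auto simp: Xop_def Dop_def wt_inc intro!: sum.cong)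

lemma ip_X_right_0: "ip 0 r (Xop c v) = 0"
  unfolding ip_def multi_indices_def by (auto simp: Xop_def intro!: sum.neutral)

lemma ip_sym: "ip m c e = ip m e c"
  unfolding ip_def by (auto intro!: sum.cong)

lemma ip_nonneg: "ip m c c \<ge> 0"
  unfolding ip_def by (intro sum_nonneg) (simp add: mult.assoc wt_pos less_imp_le)



definition Sm :: "real^'d^'d \<Rightarrow> 'd \<Rightarrow> 'd \<Rightarrow> real" where
  "Sm A i j = (A$i$j + A$j$i) / 2"
definition LS :: "real^'d::finite^'d \<Rightarrow> (('d \<Rightarrow> nat) \<Rightarrow> real) \<Rightarrow> (('d \<Rightarrow> nat) \<Rightarrow> real)" where
  "LS A c = (\<lambda>\<alpha>. \<Sum>a\<in>UNIV. \<Sum>b\<in>UNIV. Sm A a b * Dop a (Dop b c) \<alpha>)"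
definition Lop :: "real^'d::finite^'d \<Rightarrow> (('d \<Rightarrow> nat) \<Rightarrow> real) \<Rightarrow> (('d \<Rightarrow> nat) \<Rightarrow> real)" where
  "Lop A c = (\<lambda>\<alpha>. \<Sum>a\<in>UNIV. \<Sum>b\<in>UNIV. A$a$b * Dop a (Dop b c) \<alpha>)"
definition Mop :: "real^'d::finite^'d \<Rightarrow> (('d \<Rightarrow> nat) \<Rightarrow> real) \<Rightarrow> (('d \<Rightarrow> nat) \<Rightarrow> real)" where
  "Mop A r = (\<lambda>\<alpha>. \<Sum>c\<in>UNIV. \<Sum>d\<in>UNIV. Sm A c d * Xop c (Xop d r) \<alpha>)"
definition Nop :: "real^'d::finite^'d \<Rightarrow> 'd \<Rightarrow> (('d \<Rightarrow> nat) \<Rightarrow> real) \<Rightarrow> (('d \<Rightarrow> nat) \<Rightarrow> real)" where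
  "Nop A b r = (\<lambda>\<alpha>. \<Sum>c\<in>UNIV. Sm A b c * Xop c r \<alpha>)"
definition Uop :: "real^'d::finite^'d \<Rightarrow> 'd \<Rightarrow> (('d \<Rightarrow> nat) \<Rightarrow> real) \<Rightarrow> (('d \<Rightarrow> nat) \<Rightarrow> real)" where
  "Uop A a r = (\<lambda>\<alpha>. \<Sum>c\<in>UNIV. Sm A a c * Dop c r \<alpha>)"

lemma Sm_sym: "Sm A i j = Sm A j i" by (simp add: Sm_def)

lemma Dop_sum: "Dop i (\<lambda>\<alpha>. \<Sum>k\<in>K. f k \<alpha>) = (\<lambda>\<alpha>. \<Sum>k\<in>K. Dop i (f k) \<alpha>)"
  by (simp add: Dop_def sum_distrib_left)
lemma Dop_cmult: "Dop i (\<lambda>\<alpha>. a * f \<alpha>) = (\<lambda>\<alpha>. a * Dop i f \<alpha>)"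
  by (simp add: Dop_def fun_eq_iff)
lemma Dop_add: "Dop i (\<lambda>\<alpha>. f \<alpha> + g \<alpha>) = (\<lambda>\<alpha>. Dop i f \<alpha> + Dop i g \<alpha>)"
  by (simp add: Dop_def fun_eq_iff algebra_simps)
lemma Xop_sum: "Xop i (\<lambda>\<alpha>. \<Sum>k\<in>K. f k \<alpha>) = (\<lambda>\<alpha>. \<Sum>k\<in>K. Xop i (f k) \<alpha>)"
  by (simp add: Xop_def fun_eq_iff)
lemma Xop_cmult: "Xop i (\<lambda>\<alpha>. a * f \<alpha>) = (\<lambda>\<alpha>. a * Xop i f \<alpha>)"
  by (simp add: Xop_def fun_eq_iff)
lemma Xop_add: "Xop i (\<lambda>\<alpha>. f \<alpha> + g \<alpha>) = (\<lambda>\<alpha>. Xop i f \<alpha> + Xop i g \<alpha>)"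
  by (simp add: Xop_def fun_eq_iff)

lemma Dop_comm: "Dop a (Dop b c) = Dop b (Dop a c)"
proof (cases "a = b")
  case False
  then have "inc a (inc b \<alpha>) = inc b (inc a \<alpha>)" for \<alpha> by (auto simp: inc_def fun_eq_iff)
  note h = this
  show ?thesis
  proof (rule ext)
    fix \<alpha> show "Dop a (Dop b c) \<alpha> = Dop b (Dop a c) \<alpha>"
      unfolding Dop_def using False by (simp add: h[of \<alpha>])
  qed
qed simp

lemma comm: "Dop i (Xop j c) = (\<lambda>\<alpha>. Xop j (Dop i c) \<alpha> + (if i = j then c \<alpha> else 0))"
proof (rule ext)
  fix \<alpha>
  show "Dop i (Xop j c) \<alpha> = Xop j (Dop i c) \<alpha> + (if i = j then c \<alpha> else 0)"
  proof (cases "i = j")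
    case True
    then show ?thesis by (cases "\<alpha> j") (auto simp: Dop_def Xop_def algebra_simps)
  next
    case False
    have "dec j (inc i \<alpha>) = inc i (dec j \<alpha>)" using False by (auto simp: inc_def dec_def fun_eq_iff)
    then show ?thesis using False by (auto simp: Dop_def Xop_def)
  qed
qed

lemma sum_if_const: "(\<Sum>d\<in>D. if P then f d else 0) = (if P then \<Sum>d\<in>D. f d else (0::real))"
  by auto

lemma DXX: "Dop b (Xop c (Xop d r)) \<alpha> = Xop c (Xop d (Dop b r)) \<alpha>
   + (if b = d then Xop c r \<alpha> else 0) + (if b = c then Xop d r \<alpha> else 0)"
proof -
  have "Dop b (Xop c (Xop d r)) \<alpha> = Xop c (Dop b (Xop d r)) \<alpha> + (if b = c then Xop d r \<alpha> else 0)"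
    by (simp add: comm)
  also have "Xop c (Dop b (Xop d r)) \<alpha> = Xop c (Xop d (Dop b r)) \<alpha> + (if b = d then Xop c r \<alpha> else 0)"
    by (cases "b = d") (auto simp: comm Xop_add)
  finally show ?thesis by simp
qed

lemma DM: "Dop b (Mop A r) = (\<lambda>\<alpha>. Mop A (Dop b r) \<alpha> + 2 * Nop A b r \<alpha>)"
proof (rule ext)
  fix \<alpha>
  have "Dop b (Mop A r) \<alpha> = (\<Sum>c\<in>UNIV. \<Sum>d\<in>UNIV. Sm A c d * Dop b (Xop c (Xop d r)) \<alpha>)"
    by (simp add: Mop_def Dop_sum Dop_cmult)
  also have "\<dots> = Mop A (Dop b r) \<alpha> + (\<Sum>c\<in>UNIV. Sm A c b * Xop c r \<alpha>) + (\<Sum>d\<in>UNIV. Sm A b d * Xop d r \<alpha>)"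
  proof -
    have eq: "\<And>c d. Sm A c d * Dop b (Xop c (Xop d r)) \<alpha> = Sm A c d * Xop c (Xop d (Dop b r)) \<alpha>
       + (if d = b then Sm A c b * Xop c r \<alpha> else 0) + (if c = b then Sm A b d * Xop d r \<alpha> else 0)"
      by (auto simp add: DXX distrib_left)
    show ?thesis by (simp add: eq sum.distrib Mop_def sum_if_const)
  qed
  also have "(\<Sum>c\<in>UNIV. Sm A c b * Xop c r \<alpha>) = Nop A b r \<alpha>"
    by (simp add: Nop_def Sm_sym)
  also have "(\<Sum>d\<in>UNIV. Sm A b d * Xop d r \<alpha>) = Nop A b r \<alpha>"
    by (simp add: Nop_def)
  finally show "Dop b (Mop A r) \<alpha> = Mop A (Dop b r) \<alpha> + 2 * Nop A b r \<alpha>" by simp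
qed

lemma DN: "Dop a (Nop A b r) = (\<lambda>\<alpha>. Nop A b (Dop a r) \<alpha> + Sm A b a * r \<alpha>)"
proof (rule ext)
  fix \<alpha>
  have eq: "\<And>c. Sm A b c * Dop a (Xop c r) \<alpha> = Sm A b c * Xop c (Dop a r) \<alpha> + (if c = a then Sm A b a * r \<alpha> else 0)"
    by (auto simp add: comm distrib_left)
  show "Dop a (Nop A b r) \<alpha> = Nop A b (Dop a r) \<alpha> + Sm A b a * r \<alpha>"
    by (simp add: Nop_def Dop_sum Dop_cmult eq sum.distrib)
qed

lemma swap3: "(\<Sum>c\<in>C. \<Sum>d\<in>D. \<Sum>k\<in>K. F c d k) = (\<Sum>k\<in>K. \<Sum>c\<in>C. \<Sum>d\<in>D. F c d k)"
proof -
  have "(\<Sum>c\<in>C. \<Sum>d\<in>D. \<Sum>k\<in>K. F c d k) = (\<Sum>c\<in>C. \<Sum>k\<in>K. \<Sum>d\<in>D. F c d k)"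
    by (rule sum.cong[OF refl], rule sum.swap)
  also have "\<dots> = (\<Sum>k\<in>K. \<Sum>c\<in>C. \<Sum>d\<in>D. F c d k)" by (rule sum.swap)
  finally show ?thesis .
qed

lemma Mop_sum: "Mop A (\<lambda>\<beta>. \<Sum>k\<in>K. h k \<beta>) \<alpha> = (\<Sum>k\<in>K. Mop A (h k) \<alpha>)"
  unfolding Mop_def Xop_sum sum_distrib_left by (rule swap3)

lemma Mop_cmult: "Mop A (\<lambda>\<beta>. a * h \<beta>) \<alpha> = a * Mop A h \<alpha>"
  unfolding Mop_def Xop_cmult by (simp add: sum_distrib_left algebra_simps)

lemma Mop_lin: "Mop A (\<lambda>\<beta>. \<Sum>a\<in>UNIV. \<Sum>b\<in>UNIV. g a b * f a b \<beta>) \<alpha>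
   = (\<Sum>a\<in>UNIV. \<Sum>b\<in>UNIV. g a b * Mop A (f a b) \<alpha>)"
  by (simp add: Mop_sum Mop_cmult)



lemma LM: "LS A (Mop A r) \<alpha> = Mop A (LS A r) \<alpha>
   + 2 * (\<Sum>a\<in>UNIV. \<Sum>b\<in>UNIV. Sm A a b * (Nop A a (Dop b r) \<alpha> + Nop A b (Dop a r) \<alpha>))
   + 2 * (\<Sum>a\<in>UNIV. \<Sum>b\<in>UNIV. Sm A a b * Sm A a b) * r \<alpha>"
proof -
  have eq: "Dop a (Dop b (Mop A r)) \<alpha> = Mop A (Dop a (Dop b r)) \<alpha> + 2 * Nop A a (Dop b r) \<alpha>
      + 2 * Nop A b (Dop a r) \<alpha> + 2 * Sm A a b * r \<alpha>" for a b
    by (simp add: DM DN Dop_add Dop_cmult algebra_simps Sm_sym)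
  have "LS A (Mop A r) \<alpha> = (\<Sum>a\<in>UNIV. \<Sum>b\<in>UNIV. Sm A a b * Mop A (Dop a (Dop b r)) \<alpha>)
     + 2 * (\<Sum>a\<in>UNIV. \<Sum>b\<in>UNIV. Sm A a b * (Nop A a (Dop b r) \<alpha> + Nop A b (Dop a r) \<alpha>))
     + 2 * (\<Sum>a\<in>UNIV. \<Sum>b\<in>UNIV. Sm A a b * Sm A a b) * r \<alpha>"
    unfolding LS_def eq
    by (simp add: sum.distrib distrib_left sum_distrib_left sum_distrib_right algebra_simps)
  moreover have "Mop A (LS A r) \<alpha> = (\<Sum>a\<in>UNIV. \<Sum>b\<in>UNIV. Sm A a b * Mop A (Dop a (Dop b r)) \<alpha>)"
    unfolding LS_def by (rule Mop_lin)
  ultimately show ?thesis by simp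
qed

lemma ip_sum_right: "ip m r (\<lambda>\<alpha>. \<Sum>k\<in>K. f k \<alpha>) = (\<Sum>k\<in>K. ip m r (f k))"
  unfolding ip_def by (simp add: sum_distrib_left) (rule sum.swap)
lemma ip_cmult_right: "ip m r (\<lambda>\<alpha>. a * f \<alpha>) = a * ip m r f"
  unfolding ip_def by (simp add: sum_distrib_left algebra_simps)
lemma ip_add_right: "ip m r (\<lambda>\<alpha>. f \<alpha> + g \<alpha>) = ip m r f + ip m r g"
  unfolding ip_def by (simp add: sum.distrib algebra_simps)
lemma ip_sum_left: "ip m (\<lambda>\<alpha>. \<Sum>k\<in>K. f k \<alpha>) r = (\<Sum>k\<in>K. ip m (f k) r)"
  by (subst ip_sym, simp add: ip_sum_right ip_sym)
lemma ip_cmult_left: "ip m (\<lambda>\<alpha>. a * f \<alpha>) r = a * ip m f r"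
  by (subst ip_sym, simp add: ip_cmult_right ip_sym)

lemma LS_alt: "(\<lambda>\<alpha>. \<Sum>c\<in>UNIV. \<Sum>d\<in>UNIV. Sm A c d * Dop d (Dop c r) \<alpha>) = LS A r"
  unfolding LS_def by (rule ext, subst sum.swap) (simp add: Sm_sym)

lemma ip_M: "ip m r (Mop A w) = (case m of Suc (Suc n) \<Rightarrow> ip n (LS A r) w | _ \<Rightarrow> 0)"
proof -
  have "ip m r (Mop A w) = (\<Sum>c\<in>UNIV. \<Sum>d\<in>UNIV. Sm A c d * ip m r (Xop c (Xop d w)))"
    unfolding Mop_def by (simp add: ip_sum_right ip_cmult_right)
  also have "\<dots> = (case m of Suc (Suc n) \<Rightarrow> ip n (LS A r) w | _ \<Rightarrow> 0)"
  proof (cases m)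
    case 0 then show ?thesis by (simp add: ip_X_right_0)
  next
    case (Suc k)
    show ?thesis
    proof (cases k)
      case 0 then show ?thesis using Suc by (simp add: ip_X_right_Suc ip_X_right_0)
    next
      case (Suc n)
      have "(\<Sum>c\<in>UNIV. \<Sum>d\<in>UNIV. Sm A c d * ip m r (Xop c (Xop d w)))
          = ip n (\<lambda>\<alpha>. \<Sum>c\<in>UNIV. \<Sum>d\<in>UNIV. Sm A c d * Dop d (Dop c r) \<alpha>) w"
        using \<open>m = Suc k\<close> Suc by (simp add: ip_X_right_Suc ip_sum_left ip_cmult_left)
      then show ?thesis using \<open>m = Suc k\<close> Suc by (simp add: LS_alt)
    qed
  qed
  finally show ?thesis .
qed

lemma ip_N: "ip m r (Nop A a v) = (case m of 0 \<Rightarrow> 0 | Suc n \<Rightarrow> ip n (Uop A a r) v)"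
proof (cases m)
  case 0 then show ?thesis by (simp add: Nop_def ip_sum_right ip_cmult_right ip_X_right_0)
next
  case (Suc n) then show ?thesis
    by (simp add: Nop_def Uop_def ip_sum_right ip_cmult_right ip_X_right_Suc ip_sum_left ip_cmult_left)
qed

lemma ip_nonneg_sum: "(\<Sum>a\<in>K. ip n (f a) (f a)) \<ge> 0"
  by (intro sum_nonneg ip_nonneg)

lemma G_nonneg: "(\<Sum>a\<in>UNIV. \<Sum>b\<in>UNIV. Sm A a b * (ip m r (Nop A a (Dop b r)) + ip m r (Nop A b (Dop a r)))) \<ge> 0"
proof (cases m)
  case 0 then show ?thesis by (simp add: ip_N)
next
  case (Suc n)
  have 1: "(\<Sum>a\<in>UNIV. \<Sum>b\<in>UNIV. Sm A a b * ip n (Uop A a r) (Dop b r)) = (\<Sum>a\<in>UNIV. ip n (Uop A a r) (Uop A a r))"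
    by (simp add: Uop_def ip_sum_right ip_cmult_right)
  have 2: "(\<Sum>a\<in>UNIV. \<Sum>b\<in>UNIV. Sm A a b * ip n (Uop A b r) (Dop a r)) = (\<Sum>b\<in>UNIV. ip n (Uop A b r) (Uop A b r))"
    by (subst sum.swap) (simp add: Uop_def ip_sum_right ip_cmult_right Sm_sym)
  have "(\<Sum>a\<in>UNIV. \<Sum>b\<in>UNIV. Sm A a b * (ip m r (Nop A a (Dop b r)) + ip m r (Nop A b (Dop a r))))
     = (\<Sum>a\<in>UNIV. \<Sum>b\<in>UNIV. Sm A a b * ip n (Uop A a r) (Dop b r)) + (\<Sum>a\<in>UNIV. \<Sum>b\<in>UNIV. Sm A a b * ip n (Uop A b r) (Dop a r))"
    using Suc by (simp add: ip_N distrib_left sum.distrib)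
  also have "\<dots> \<ge> 0" unfolding 1 2 by (intro add_nonneg_nonneg ip_nonneg_sum)
  finally show ?thesis .
qed

lemma LSM_pos: "ip m r (LS A (Mop A r)) \<ge> 2 * (\<Sum>a\<in>UNIV. \<Sum>b\<in>UNIV. Sm A a b * Sm A a b) * ip m r r"
proof -
  have "ip m r (LS A (Mop A r)) = ip m r (Mop A (LS A r))
     + 2 * (\<Sum>a\<in>UNIV. \<Sum>b\<in>UNIV. Sm A a b * (ip m r (Nop A a (Dop b r)) + ip m r (Nop A b (Dop a r))))
     + 2 * (\<Sum>a\<in>UNIV. \<Sum>b\<in>UNIV. Sm A a b * Sm A a b) * ip m r r"
    unfolding LM by (simp add: ip_add_right ip_cmult_right ip_sum_right mult.assoc)
  moreover have "ip m r (Mop A (LS A r)) \<ge> 0"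
    by (simp add: ip_M ip_nonneg split: nat.split)
  ultimately show ?thesis using G_nonneg[of A m r] by linarith
qed

lemma ip_MM: "ip (Suc (Suc m)) (Mop A r) (Mop A r) = ip m r (LS A (Mop A r))"
  by (simp add: ip_M ip_sym)



definition evalp :: "nat \<Rightarrow> (('d::finite \<Rightarrow> nat) \<Rightarrow> real) \<Rightarrow> real^'d \<Rightarrow> real" where
  "evalp m c = (\<lambda>x. \<Sum>\<alpha>\<in>multi_indices m. c \<alpha> * monomial \<alpha> x)"

lemma monomial_split: "monomial \<alpha> x = x$i ^ \<alpha> i * (\<Prod>k\<in>UNIV-{i}. (x$k) ^ \<alpha> k)"
  unfolding monomial_def by (subst prod.remove[of _ i]) auto

lemma mono_deriv:
  "((\<lambda>t. monomial \<alpha> (x + t *\<^sub>R axis i 1)) has_real_derivative (real (\<alpha> i) * monomial (dec i \<alpha>) x)) (at 0)"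
proof -
  define R where "R = (\<Prod>k\<in>UNIV-{i}. (x$k) ^ \<alpha> k)"
  have fe: "(\<lambda>t. monomial \<alpha> (x + t *\<^sub>R axis i 1)) = (\<lambda>t. (x$i + t) ^ \<alpha> i * R)"
  proof (rule ext)
    fix t
    have "(\<Prod>k\<in>UNIV-{i}. ((x + t *\<^sub>R axis i 1)$k) ^ \<alpha> k) = R"
      unfolding R_def by (intro prod.cong) (auto simp: axis_def)
    then show "monomial \<alpha> (x + t *\<^sub>R axis i 1) = (x$i + t) ^ \<alpha> i * R"
      by (subst monomial_split[of _ _ i]) (simp add: axis_def)
  qed
  have md: "monomial (dec i \<alpha>) x = x$i ^ (\<alpha> i - 1) * R"
  proof -
    have "(\<Prod>k\<in>UNIV-{i}. (x$k) ^ dec i \<alpha> k) = R"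
      unfolding R_def by (intro prod.cong) auto
    then show ?thesis by (subst monomial_split[of _ _ i]) simp
  qed
  have "((\<lambda>t. (x$i + t) ^ \<alpha> i * R) has_real_derivative (real (\<alpha> i) * (x$i + 0) ^ (\<alpha> i - 1) * 1 * R)) (at 0)"
    by (auto intro!: derivative_eq_intros)
  then show ?thesis unfolding fe md by (simp add: mult.assoc)
qed

lemma evalp_partial: "partial i (evalp (Suc m) c) = evalp m (Dop i c)"
proof (rule ext)
  fix x
  have "((\<lambda>t. evalp (Suc m) c (x + t *\<^sub>R axis i 1)) has_real_derivative
        (\<Sum>\<alpha>\<in>multi_indices (Suc m). c \<alpha> * (real (\<alpha> i) * monomial (dec i \<alpha>) x))) (at 0)"
    unfolding evalp_def by (intro DERIV_sum DERIV_cmult mono_deriv)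
  then have "partial i (evalp (Suc m) c) x = (\<Sum>\<alpha>\<in>multi_indices (Suc m). c \<alpha> * (real (\<alpha> i) * monomial (dec i \<alpha>) x))"
    unfolding partial_def by (rule DERIV_imp_deriv)
  also have "\<dots> = (\<Sum>\<gamma>\<in>multi_indices m. c (inc i \<gamma>) * (real (inc i \<gamma> i) * monomial (dec i (inc i \<gamma>)) x))"
    by (rule sum_reindex_inc) simp
  also have "\<dots> = evalp m (Dop i c) x"
    unfolding evalp_def Dop_def by (intro sum.cong) auto
  finally show "partial i (evalp (Suc m) c) x = evalp m (Dop i c) x" .
qed

lemma multi_indices_0: "multi_indices 0 = {(\<lambda>_. 0) :: 'd::finite \<Rightarrow> nat}"
  unfolding multi_indices_def by (auto simp: fun_eq_iff)

lemma evalp_0: "evalp 0 c x = c (\<lambda>_. 0)"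
  unfolding evalp_def multi_indices_0 by (simp add: monomial_def)

fun Dl :: "'d list \<Rightarrow> (('d \<Rightarrow> nat) \<Rightarrow> real) \<Rightarrow> (('d \<Rightarrow> nat) \<Rightarrow> real)" where
  "Dl [] c = c"
| "Dl (i # is) c = Dop i (Dl is c)"

lemma partial_list_evalp: "partial_list xs (evalp (length xs + k) c) = evalp k (Dl xs c)"
proof (induction xs arbitrary: k)
  case (Cons i xs)
  have "partial_list (i # xs) (evalp (length (i # xs) + k) c) = partial i (partial_list xs (evalp (Suc (length xs + k)) c))"
    by simp
  also have "evalp (Suc (length xs + k)) c = evalp (length xs + Suc k) c" by simp
  also have "partial_list xs (evalp (length xs + Suc k) c) = evalp (Suc k) (Dl xs c)"
    by (rule Cons.IH[of "Suc k"]) 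
  finally show ?case by (simp add: evalp_partial)
qed simp



lemma Dl_formula: "Dl xs c \<gamma> * wt \<gamma> = wt (\<lambda>i. \<gamma> i + count_list xs i) * c (\<lambda>i. \<gamma> i + count_list xs i)"
proof (induction xs arbitrary: \<gamma>)
  case Nil then show ?case by simp
next
  case (Cons x xs)
  have e: "(\<lambda>i. inc x \<gamma> i + count_list xs i) = (\<lambda>i. \<gamma> i + count_list (x # xs) i)"
    by (auto simp: fun_eq_iff inc_def)
  have "Dl (x # xs) c \<gamma> * wt \<gamma> = Dl xs c (inc x \<gamma>) * wt (inc x \<gamma>)"
    by (simp add: Dop_def wt_inc)
  also have "\<dots> = wt (\<lambda>i. \<gamma> i + count_list (x # xs) i) * c (\<lambda>i. \<gamma> i + count_list (x # xs) i)"
    using Cons.IH[of "inc x \<gamma>"] e by simp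
  finally show ?case .
qed

lemma ex_list: "\<exists>xs. \<forall>i. count_list xs i = (\<alpha>::'d::finite \<Rightarrow> nat) i"
proof (induction "sum \<alpha> UNIV" arbitrary: \<alpha>)
  case 0
  then have "\<alpha> = (\<lambda>_. 0)" by (auto simp: fun_eq_iff)
  then show ?case by (intro exI[of _ "[]"]) simp
next
  case (Suc n)
  have "\<exists>i. \<alpha> i \<noteq> 0"
  proof (rule ccontr)
    assume "\<not> (\<exists>i. \<alpha> i \<noteq> 0)"
    then have "sum \<alpha> UNIV = 0" by simp
    then show False using Suc(2) by simp
  qed
  then obtain i where i: "\<alpha> i > 0" by auto
  have "sum (dec i \<alpha>) UNIV = n"
    using sum_upd[of \<alpha> i "\<alpha> i - 1"] Suc(2) i unfolding dec_def by simp
  then obtain xs where xs: "\<forall>j. count_list xs j = dec i \<alpha> j" using Suc(1) by blast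
  show ?case
    by (intro exI[of _ "i # xs"]) (use xs i in \<open>auto simp: dec_def\<close>)
qed

lemma wt_zero: "wt (\<lambda>_::'d::finite. 0) = 1" by (simp add: wt_def)

lemma grad_evalp: "\<alpha> \<in> multi_indices m \<Longrightarrow> grad_tensor m (evalp m c) \<alpha> = wt \<alpha> * c \<alpha>"
proof -
  assume a: "\<alpha> \<in> multi_indices m"
  define xs where "xs = (SOME xs. \<forall>i. count_list xs i = \<alpha> i)"
  have cnt: "\<forall>i. count_list xs i = \<alpha> i" unfolding xs_def using someI_ex[OF ex_list[of \<alpha>]] .
  have len: "length xs = m"
    using sum_count_set[of xs UNIV] cnt a by (simp add: multi_indices_def)
  have "grad_tensor m (evalp m c) \<alpha> = partial_list xs (evalp (length xs + 0) c) 0"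
    unfolding grad_tensor_def partial_multi_def xs_def[symmetric] using len by simp
  also have "\<dots> = Dl xs c (\<lambda>_. 0)" using partial_list_evalp[of xs 0 c] by (simp add: evalp_0)
  also have "\<dots> = wt \<alpha> * c \<alpha>"
    using Dl_formula[of xs c "\<lambda>_. 0"] cnt by (simp add: wt_zero)
  finally show ?thesis .
qed

lemma tensor_norm_evalp: "tensor_norm m (grad_tensor m (evalp m c)) = sqrt (fact m * ip m c c)"
proof -
  have "(\<Sum>\<alpha>\<in>multi_indices m. (fact m / (\<Prod>i\<in>UNIV. fact (\<alpha> i))) * (grad_tensor m (evalp m c) \<alpha>)^2)
      = (\<Sum>\<alpha>\<in>multi_indices m. fact m * (wt \<alpha> * c \<alpha> * c \<alpha>))"
  proof (intro sum.cong refl)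
    fix \<alpha> :: "'a \<Rightarrow> nat" assume "\<alpha> \<in> multi_indices m"
    then show "(fact m / (\<Prod>i\<in>UNIV. fact (\<alpha> i))) * (grad_tensor m (evalp m c) \<alpha>)^2 = fact m * (wt \<alpha> * c \<alpha> * c \<alpha>)"
      using wt_pos[of \<alpha>] by (simp add: grad_evalp power2_eq_square wt_def[symmetric] field_simps)
  qed
  then show ?thesis unfolding tensor_norm_def ip_def by (simp add: sum_distrib_left)
qed

lemma evalp_sum: "evalp n (\<lambda>\<alpha>. \<Sum>k\<in>K. f k \<alpha>) x = (\<Sum>k\<in>K. evalp n (f k) x)"
  unfolding evalp_def by (simp add: sum_distrib_right) (rule sum.swap)
lemma evalp_cmult: "evalp n (\<lambda>\<alpha>. a * f \<alpha>) x = a * evalp n f x"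
  unfolding evalp_def by (simp add: sum_distrib_left algebra_simps)
lemma evalp_neg: "evalp n (\<lambda>\<alpha>. - f \<alpha>) x = - evalp n f x"
  unfolding evalp_def by (simp add: sum_negf)

lemma neg_div_evalp: "neg_div_A_grad A (evalp (Suc (Suc m)) q) x = evalp m (\<lambda>\<alpha>. - Lop A q \<alpha>) x"
proof -
  have 1: "(\<lambda>y. \<Sum>j\<in>UNIV. A $ i $ j * evalp (Suc m) (Dop j q) y)
        = evalp (Suc m) (\<lambda>\<alpha>. \<Sum>j\<in>UNIV. A $ i $ j * Dop j q \<alpha>)" for i
    by (rule ext) (simp add: evalp_sum evalp_cmult)
  have "neg_div_A_grad A (evalp (Suc (Suc m)) q) x
     = - (\<Sum>i\<in>UNIV. evalp m (Dop i (\<lambda>\<alpha>. \<Sum>j\<in>UNIV. A $ i $ j * Dop j q \<alpha>)) x)"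
    unfolding neg_div_A_grad_def by (simp only: evalp_partial 1)
  also have "\<dots> = evalp m (\<lambda>\<alpha>. - Lop A q \<alpha>) x"
    by (simp add: evalp_neg evalp_sum Lop_def Dop_sum Dop_cmult evalp_cmult)
  finally show ?thesis .
qed

lemma LS_Lop: "LS A c = Lop A c"
proof (rule ext)
  fix \<alpha>
  have sw: "(\<Sum>a\<in>UNIV. \<Sum>b\<in>UNIV. A$b$a * Dop a (Dop b c) \<alpha>) = (\<Sum>a\<in>UNIV. \<Sum>b\<in>UNIV. A$a$b * Dop a (Dop b c) \<alpha>)"
    by (subst sum.swap) (intro sum.cong refl, subst Dop_comm, rule refl)
  show "LS A c \<alpha> = Lop A c \<alpha>"
  proof -
    have "LS A c \<alpha> = (\<Sum>a\<in>UNIV. \<Sum>b\<in>UNIV. A$a$b * Dop a (Dop b c) \<alpha>) / 2 + (\<Sum>a\<in>UNIV. \<Sum>b\<in>UNIV. A$b$a * Dop a (Dop b c) \<alpha>) / 2"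
      unfolding LS_def Sm_def sum_divide_distrib sum.distrib[symmetric] by (intro sum.cong refl) (simp add: field_simps)
    then show ?thesis unfolding sw Lop_def by simp
  qed
qed



lemma Mop_lin2: "Mop A (\<lambda>\<beta>. a * x \<beta> + b * y \<beta>) = (\<lambda>\<alpha>. a * Mop A x \<alpha> + b * Mop A y \<alpha>)"
  unfolding Mop_def
  by (simp add: Xop_add Xop_cmult distrib_left sum.distrib sum_distrib_left mult.left_commute)

lemma LS_lin2: "LS A (\<lambda>\<beta>. a * x \<beta> + b * y \<beta>) = (\<lambda>\<alpha>. a * LS A x \<alpha> + b * LS A y \<alpha>)"
  unfolding LS_def
  by (simp add: Dop_add Dop_cmult distrib_left sum.distrib sum_distrib_left mult.left_commute)

lemma ip_zero_imp: "ip m x x = 0 \<Longrightarrow> \<alpha> \<in> multi_indices m \<Longrightarrow> x \<alpha> = 0"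
proof -
  assume z: "ip m x x = 0" and a: "\<alpha> \<in> multi_indices m"
  have "\<forall>\<beta>\<in>multi_indices m. wt \<beta> * x \<beta> * x \<beta> = 0"
    using z unfolding ip_def
    by (subst sum_nonneg_eq_0_iff[symmetric]) (auto simp: finite_multi_indices mult.assoc wt_pos less_imp_le)
  then show ?thesis using a wt_pos[of \<alpha>] by auto
qed

lemma ip_cross: "ip m r r + ip m c c / 4 + ip m r c \<ge> 0"
proof -
  have "ip m r r + ip m c c / 4 + ip m r c = (\<Sum>\<alpha>\<in>multi_indices m. wt \<alpha> * (r \<alpha> + c \<alpha> / 2)^2)"
    unfolding ip_def sum_divide_distrib sum.distrib[symmetric]
    by (intro sum.cong refl) (simp add: power2_eq_square field_simps)
  also have "\<dots> \<ge> 0" by (intro sum_nonneg) (simp add: wt_pos less_imp_le)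
  finally show ?thesis .
qed

lemma nine_pow: "real ((m + 2) * (m + 1)) \<le> 2 * 9 ^ m"
proof (induction m)
  case (Suc m)
  have "real ((Suc m + 2) * (Suc m + 1)) \<le> 9 * real ((m + 2) * (m + 1))" by simp
  also have "\<dots> \<le> 9 * (2 * 9 ^ m)" using Suc by simp
  finally show ?case by simp
qed simp

lemma axis_quad: "axis i 1 \<bullet> (A *v axis i (1::real)) = A $ i $ i"
  unfolding inner_axis' by (simp add: matrix_vector_mult_def axis_def if_distrib cong: if_cong)

theorem lemma2p2:
  fixes \<Lambda> :: real
  assumes "\<Lambda> \<ge> 1"
  shows "\<exists>C::real. \<forall>(A::real^'d::finite^'d).
           (\<forall>\<xi>. (norm \<xi>)^2 \<le> \<xi> \<bullet> (A *v \<xi>)) \<longrightarrow>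
           (\<forall>\<xi> \<eta>. \<bar>\<eta> \<bullet> (A *v \<xi>)\<bar> \<le> \<Lambda> * norm \<eta> * norm \<xi>) \<longrightarrow>
           (\<forall>m. \<forall>p\<in>hom_polys m. \<exists>q\<in>hom_polys (m + 2).
               (\<forall>x. neg_div_A_grad A q x = p x) \<and>
               tensor_norm (m + 2) (grad_tensor (m + 2) q) \<le> C ^ m * tensor_norm m (grad_tensor m p))"
proof (intro exI[of _ 3] allI impI ballI)
  fix A :: "real^'d^'d" and m :: nat and p :: "real^'d \<Rightarrow> real"
  assume ell: "\<forall>\<xi>. (norm \<xi>)^2 \<le> \<xi> \<bullet> (A *v \<xi>)"
  assume "p \<in> hom_polys m"
  then obtain c0 where p: "p = evalp m c0" unfolding hom_polys_def evalp_def by auto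
  define K where "K = (\<Sum>a\<in>UNIV. \<Sum>b\<in>UNIV. Sm A a b * Sm A a b)"
  define i0 :: 'd where "i0 = undefined"
  have "1 \<le> A $ i0 $ i0" using ell[rule_format, of "axis i0 1"] by (simp add: axis_quad norm_axis_1)
  then have S1: "1 \<le> Sm A i0 i0 * Sm A i0 i0" by (simp add: Sm_def) (metis mult_mono' one_le_numeral mult_1 order.trans zero_le_one)
  have "Sm A i0 i0 * Sm A i0 i0 \<le> (\<Sum>b\<in>UNIV. Sm A i0 b * Sm A i0 b)"
    by (rule member_le_sum) auto
  also have "\<dots> \<le> K" unfolding K_def
    by (rule member_le_sum[where f="\<lambda>a. \<Sum>b\<in>UNIV. Sm A a b * Sm A a b"]) (auto intro: sum_nonneg)
  finally have K1: "K \<ge> 1" using S1 by linarith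
  define J where "J = (multi_indices m :: ('d \<Rightarrow> nat) set)"
  have "\<exists>r. \<forall>k\<in>J. LS A (Mop A r) k = - c0 k"
  proof (rule fin_surj)
    show "finite J" unfolding J_def by (rule finite_multi_indices)
    show "LS A (Mop A (\<lambda>k. a * x k + b * y k)) = (\<lambda>k. a * LS A (Mop A x) k + b * LS A (Mop A y) k)" for a b x y
      by (simp add: Mop_lin2 LS_lin2)
    show "\<forall>k\<in>J. x k = 0" if z: "\<forall>k\<in>J. LS A (Mop A x) k = 0" for x
    proof -
      have "ip m x (LS A (Mop A x)) = 0" using z unfolding ip_def J_def by simp
      then have "2 * K * ip m x x \<le> 0" using LSM_pos[where m=m and r=x and A=A] unfolding K_def by simp
      then have "ip m x x = 0" using K1 ip_nonneg[of m x] by (smt (verit) mult_pos_pos)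
      then show ?thesis using ip_zero_imp unfolding J_def by blast
    qed
  qed
  then obtain r where r: "\<forall>k\<in>multi_indices m. LS A (Mop A r) k = - c0 k" unfolding J_def by blast
  define q where "q = evalp (Suc (Suc m)) (Mop A r)"
  have m2: "m + 2 = Suc (Suc m)" by simp
  have qh: "q \<in> hom_polys (Suc (Suc m))" unfolding q_def hom_polys_def evalp_def by blast
  have eqn: "neg_div_A_grad A q x = p x" for x
  proof -
    have "neg_div_A_grad A q x = evalp m (\<lambda>\<alpha>. - LS A (Mop A r) \<alpha>) x"
      unfolding q_def neg_div_evalp LS_Lop ..
    also have "\<dots> = p x" unfolding p evalp_def using r by (intro sum.cong) auto
    finally show ?thesis .
  qed
  define Q where "Q = ip (Suc (Suc m)) (Mop A r) (Mop A r)"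
  define P where "P = ip m c0 c0"
  have Qeq: "Q = - ip m r c0"
  proof -
    have "Q = ip m r (LS A (Mop A r))" unfolding Q_def by (rule ip_MM)
    also have "\<dots> = ip m r (\<lambda>\<alpha>. - c0 \<alpha>)" unfolding ip_def using r by (intro sum.cong) auto
    also have "\<dots> = - ip m r c0" unfolding ip_def by (simp add: sum_negf)
    finally show ?thesis .
  qed
  have Qge: "Q \<ge> 2 * ip m r r"
  proof -
    have "Q \<ge> 2 * K * ip m r r" unfolding Q_def ip_MM K_def by (rule LSM_pos)
    moreover have "2 * K * ip m r r \<ge> 2 * ip m r r" using K1 ip_nonneg[of m r]
      by (simp add: mult_right_mono)
    ultimately show ?thesis by linarith
  qed
  have QP: "Q \<le> P / 2" using ip_cross[of m r c0] Qeq Qge unfolding P_def by linarith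
  have P0: "P \<ge> 0" unfolding P_def by (rule ip_nonneg)
  have key: "fact (Suc (Suc m)) * Q \<le> (3 ^ m)^2 * (fact m * P)"
  proof -
    have "fact (Suc (Suc m)) * Q \<le> fact (Suc (Suc m)) * (P / 2)"
      using QP by (intro mult_left_mono) auto
    also have "\<dots> = real ((m + 2) * (m + 1)) / 2 * (fact m * P)"
      by (simp add: algebra_simps)
    also have "\<dots> \<le> 9 ^ m * (fact m * P)"
      using nine_pow[of m] P0 by (intro mult_right_mono) auto
    also have "\<dots> = (3 ^ m)^2 * (fact m * P)" by (simp add: power2_eq_square power_mult_distrib[symmetric])
    finally show ?thesis .
  qed
  have "tensor_norm (Suc (Suc m)) (grad_tensor (Suc (Suc m)) q) \<le> 3 ^ m * tensor_norm m (grad_tensor m p)"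
  proof -
    have "tensor_norm (Suc (Suc m)) (grad_tensor (Suc (Suc m)) q) = sqrt (fact (Suc (Suc m)) * Q)"
      unfolding q_def Q_def by (rule tensor_norm_evalp)
    also have "\<dots> \<le> sqrt ((3 ^ m)^2 * (fact m * P))" using key by (rule real_sqrt_le_mono)
    also have "\<dots> = 3 ^ m * sqrt (fact m * P)" by (simp add: real_sqrt_mult)
    also have "sqrt (fact m * P) = tensor_norm m (grad_tensor m p)"
      unfolding p P_def by (rule tensor_norm_evalp[symmetric])
    finally show ?thesis .
  qed
  then show "\<exists>q\<in>hom_polys (m + 2). (\<forall>x. neg_div_A_grad A q x = p x) \<and>
      tensor_norm (m + 2) (grad_tensor (m + 2) q) \<le> 3 ^ m * tensor_norm m (grad_tensor m p)"
    unfolding m2 using qh eqn by blast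
qed

end
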